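(* Let $F\in\mathbb{R}[x,y,t,s]$ be square-free, with no factor depending only on $(t,s)$, and such that the leading coefficient $A_n(t,s)$ of $F$ with respect to $y$ does not depend on $x$. Let $M(x,t,s)=\sqrt{D_y(F)}$ and $R(t,s)=D_x(M)$, and assume $R$ is not identically zero. Let $t_0\in\mathbb{R}$ be such that $t-t_0$ is not a factor of $R(t,s)$. Then: (i) $A_n(t_0,s)\neq 0$; in particular $\deg_y F(x,y,t_0,s)=\deg_y F$; (ii) $\mathrm{Res}_y(F,F_y)$ specializes well at $t=t_0$, i.e. $\mathrm{Res}_y(F,F_y)(x,t_0,s)=\mathrm{Res}_y\big(F(x,y,t_0,s),F_y(x,y,t_0,s)\big)$, where $F_y=\partial F/\partial y$; (iii) $F(x,y,t_0,s)$ is square-free as a polynomial in the variables $x,y$ (it has no repeated factor of positive degree in $(x,y)$). The analogous statements hold for $s_0\in\mathbb{R}$ such that $s-s_0$ is not a factor of $R(t,s)$, with the specialization $s=s_0$.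
   Context: For a polynomial $G$ and a variable $w$, $D_w(G):=\mathrm{Res}_w(G,\partial G/\partial w)$, and $\sqrt{G}$ denotes the square-free part of $G$. By convention $M:=0$ if $\deg_y F=0$ and $R:=0$ if $\deg_x M=0$. *)

theory Defs
  imports "Subresultants.Resultant_Prelim" "HOL-Computational_Algebra.Computational_Algebra" "HOL-Computational_Algebra.Field_as_Ring"
begin

text \<open>Encoding of R[x,y,t,s]: nested univariate polynomials
  real poly poly poly poly, from outermost to innermost variable: y, x, s, t.
  Thus a value of type real poly poly poly is in R[x,s,t] (outer x, then s, inner t),
  and real poly poly is in R[s,t] (outer s, inner t).\<close>

type_synonym poly_ts = "real poly poly"
type_synonym poly_xts = "real poly poly poly"
type_synonym poly_yxts = "real poly poly poly poly"

text \<open>D_w(G) = Res_w(G, dG/dw), w the outermost variable.\<close>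
definition disc_res :: "'a::idom poly \<Rightarrow> 'a" where
  "disc_res G = resultant G (pderiv G)"

definition sqfree_part :: "'a::{factorial_semiring,normalization_semidom} \<Rightarrow> 'a" where
  "sqfree_part G = (if G = 0 then 0 else \<Prod>(prime_factors G))"

definition M_of :: "poly_yxts \<Rightarrow> poly_xts" where
  "M_of F = (if degree F = 0 then 0 else sqfree_part (disc_res F))"

definition R_of :: "poly_yxts \<Rightarrow> poly_ts" where
  "R_of F = (let M = M_of F in if degree M = 0 then 0 else disc_res M)"

abbreviation lc_y :: "poly_yxts \<Rightarrow> poly_xts" where
  "lc_y F \<equiv> lead_coeff F"

definition spec_t_ts :: "real \<Rightarrow> poly_ts \<Rightarrow> real poly" where
  "spec_t_ts t0 p = map_poly (\<lambda>c. poly c t0) p"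
definition spec_t_xts :: "real \<Rightarrow> poly_xts \<Rightarrow> real poly poly" where
  "spec_t_xts t0 p = map_poly (spec_t_ts t0) p"
definition spec_t :: "real \<Rightarrow> poly_yxts \<Rightarrow> real poly poly poly" where
  "spec_t t0 F = map_poly (spec_t_xts t0) F"

definition spec_s_ts :: "real \<Rightarrow> poly_ts \<Rightarrow> real poly" where
  "spec_s_ts s0 p = poly p [:s0:]"
definition spec_s_xts :: "real \<Rightarrow> poly_xts \<Rightarrow> real poly poly" where
  "spec_s_xts s0 p = map_poly (spec_s_ts s0) p"
definition spec_s :: "real \<Rightarrow> poly_yxts \<Rightarrow> real poly poly poly" where
  "spec_s s0 F = map_poly (spec_s_xts s0) F"

text \<open>t - t0 and s - s0 as elements of R[t,s].\<close>
definition t_lin :: "real \<Rightarrow> poly_ts" where "t_lin t0 = [:[:-t0, 1:]:]"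
definition s_lin :: "real \<Rightarrow> poly_ts" where "s_lin s0 = [:[:-s0:], 1:]"

definition sqfree_xy :: "real poly poly poly \<Rightarrow> bool" where
  "sqfree_xy G \<longleftrightarrow> (\<forall>H. H * H dvd G \<longrightarrow> degree H = 0 \<and> degree (coeff H 0) = 0)"

definition no_ts_factor :: "poly_yxts \<Rightarrow> bool" where
  "no_ts_factor F \<longleftrightarrow> \<not> (\<exists>g. g dvd F \<and> \<not> is_unit g \<and> degree g = 0 \<and> degree (coeff g 0) = 0)"

end

theory Submission
  imports Defs "Subresultants.Subresultant_Gcd"
begin

lemma lc_dvd_res:
  fixes F :: "'a::{idom,ring_char_0} poly"
  assumes "degree F \<ge> 1"
  shows "lead_coeff F dvd resultant F (pderiv F)"
proof -
  define m where "m = degree F"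
  define k where "k = degree (pderiv F)"
  have k: "k = m - 1" unfolding k_def m_def by (simp add: degree_pderiv)
  have hi: "lead_coeff F dvd coeff F j" if "j \<ge> m" for j
    using that by (cases "j = m") (auto simp: m_def coeff_eq_0)
  have A: "sylvester_mat F (pderiv F) \<in> carrier_mat (m+k) (m+k)"
    unfolding m_def k_def by (rule sylvester_carrier_mat)
  have "resultant F (pderiv F) = (\<Sum>i<m+k. sylvester_mat F (pderiv F) $$ (i,0) * cofactor (sylvester_mat F (pderiv F)) i 0)"
    unfolding resultant_def using assms by (intro laplace_expansion_column[OF A]) (auto simp: m_def)
  also have "lead_coeff F dvd \<dots>"
  proof (rule dvd_sum, rule dvd_mult2)
    fix i assume i: "i \<in> {..<m+k}"
    have e: "sylvester_mat F (pderiv F) $$ (i,0) =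
      (if i < k then if i \<le> 0 \<and> 0 - i \<le> m then coeff F (m + i - 0) else 0
       else if i - k \<le> 0 \<and> 0 \<le> i then coeff (pderiv F) (i - 0) else 0)"
      using i assms unfolding m_def k_def by (intro sylvester_index_mat) auto
    show "lead_coeff F dvd sylvester_mat F (pderiv F) $$ (i,0)"
      unfolding e using k assms
      by (auto simp: coeff_pderiv intro!: hi dvd_mult m_def)
  qed
  finally show ?thesis .
qed

locale spec_hom = idom_hom h for h :: "real poly poly \<Rightarrow> real poly" +
  fixes lin :: "real poly poly"
  assumes ker: "h p = 0 \<longleftrightarrow> lin dvd p"
begin

interpretation H: map_poly_idom_hom h ..

lemma kerK: "map_poly h q = 0 \<longleftrightarrow> [:lin:] dvd q"
proof -
  have "map_poly h q = 0 \<longleftrightarrow> (\<forall>n. coeff (map_poly h q) n = coeff 0 n)"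
    by (rule poly_eq_iff)
  also have "\<dots> \<longleftrightarrow> (\<forall>n. h (coeff q n) = 0)" by simp
  finally show ?thesis unfolding const_poly_dvd_iff by (simp add: ker)
qed

lemma res_dvd:
  fixes M :: "real poly poly poly"
  assumes "degree M > 0" "[:lin:] dvd M"
  shows "lin dvd resultant M (pderiv M)"
proof -
  obtain M1 where M: "M = [:lin:] * M1" using assms(2) by auto
  have l: "lin \<noteq> 0" using assms M by auto
  have "pderiv M = smult lin (pderiv M1)" unfolding M by (simp add: pderiv_smult)
  hence "resultant M (pderiv M) = lin ^ degree M * resultant M (pderiv M1)"
    using resultant_smult_right[OF l] by simp
  thus ?thesis using assms(1) by (simp add: dvd_power)
qed

lemma prime_lin:
  assumes "lin \<noteq> 0"
  shows "prime_elem ([:lin:] :: real poly poly poly)"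
proof (rule prime_elemI)
  show "[:lin:] \<noteq> 0" using assms by simp
  show "\<not> is_unit [:lin:]"
  proof
    assume "is_unit [:lin:]"
    hence "[:lin:] dvd (1::real poly poly poly)" by simp
    hence "map_poly h (1::real poly poly poly) = 0" using kerK by blast
    thus False by simp
  qed
  fix a b :: "real poly poly poly" assume "[:lin:] dvd a * b"
  hence "map_poly h (a * b) = 0" using kerK by blast
  hence "map_poly h a * map_poly h b = 0" by (metis H.hom_mult)
  thus "[:lin:] dvd a \<or> [:lin:] dvd b" by (metis mult_eq_0_iff kerK)
qed

lemma key:
  fixes D :: "real poly poly poly"
  assumes "D \<noteq> 0" "[:lin:] dvd D" "degree (sqfree_part D) > 0"
  shows "lin dvd resultant (sqfree_part D) (pderiv (sqfree_part D))"
proof (rule res_dvd[OF assms(3)])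
  have l: "lin \<noteq> 0" using assms by auto
  have "normalize [:lin:] \<in> prime_factors D"
    using assms prime_lin[OF l] by (simp add: in_prime_factors_iff)
  hence "normalize [:lin:] dvd \<Prod>(prime_factors D)"
    by (intro dvd_prodI) auto
  thus "[:lin:] dvd sqfree_part D" using assms(1) by (simp add: sqfree_part_def)
qed


lemma main:
  fixes F :: "real poly poly poly poly"
  assumes lc: "degree (lead_coeff F) = 0" and R0: "R_of F \<noteq> 0" and nd: "\<not> lin dvd R_of F"
  shows "h (coeff (lead_coeff F) 0) \<noteq> 0
    \<and> degree (map_poly (map_poly h) F) = degree F
    \<and> map_poly h (disc_res F) = resultant (map_poly (map_poly h) F) (map_poly (map_poly h) (pderiv F))
    \<and> sqfree_xy (map_poly (map_poly h) F)"
proof -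
  define D where "D = disc_res F"
  define M where "M = sqfree_part D"
  define F0 where "F0 = map_poly (map_poly h) F"
  define a where "a = coeff (lead_coeff F) 0"
  have dF: "degree F \<noteq> 0" using R0 unfolding R_of_def M_of_def by (auto simp: Let_def)
  have MofF: "M_of F = M" using dF unfolding M_of_def M_def D_def by simp
  have dM: "degree M \<noteq> 0" using R0 unfolding R_of_def MofF by (auto simp: Let_def)
  have R: "R_of F = resultant M (pderiv M)" using dM unfolding R_of_def MofF by (simp add: disc_res_def)
  have D0: "D \<noteq> 0" using dM unfolding M_def sqfree_part_def by auto
  have noD: False if "[:lin:] dvd D"
    using key[OF D0 that] dM nd unfolding R M_def by auto
  have lcF: "lead_coeff F = [:a:]" unfolding a_def using degree_0_id[OF lc] by simp
  have HlcF: "map_poly h (lead_coeff F) = [:h a:]" unfolding lcF by (simp add: map_poly_pCons_hom)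
  have ha: "h a \<noteq> 0"
  proof
    assume "h a = 0"
    hence "map_poly h (lead_coeff F) = 0" unfolding HlcF by simp
    hence "[:lin:] dvd lead_coeff F" using kerK by blast
    moreover have "lead_coeff F dvd D" unfolding D_def disc_res_def
      using dF by (intro lc_dvd_res) auto
    ultimately show False using noD dvd_trans by blast
  qed
  have degF0: "degree F0 = degree F" unfolding F0_def
    by (rule degree_map_poly) (use HlcF ha in auto)
  have pd: "map_poly (map_poly h) (pderiv F) = pderiv F0" unfolding F0_def
    by (rule H.map_poly_pderiv)
  have deg': "degree (map_poly (map_poly h) (pderiv F)) = degree (pderiv F)"
    unfolding pd by (simp add: degree_pderiv degF0)
  have res: "map_poly h D = resultant F0 (pderiv F0)"
    using H.resultant_map_poly[OF degF0[unfolded F0_def] deg'] pd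
    unfolding D_def disc_res_def F0_def by simp
  have F00: "F0 \<noteq> 0" using degF0 dF by auto
  have lcF0: "coeff F0 (degree F) = [:h a:]" unfolding F0_def HlcF[symmetric]
    by (simp add: coeff_map_poly)
  have sq: "sqfree_xy F0" unfolding sqfree_xy_def
  proof (intro allI impI)
    fix G assume GG: "G * G dvd F0"
    have dG: "degree G = 0"
    proof (rule ccontr)
      assume dG: "degree G \<noteq> 0"
      obtain Q where Q: "F0 = G * G * Q" using GG by auto
      have "pderiv F0 = G * (G * pderiv Q + Q * pderiv G) + (G * Q) * pderiv G"
        unfolding Q by (simp add: pderiv_mult algebra_simps)
      hence "G dvd pderiv F0" by simp
      moreover have "G dvd F0" unfolding Q by simp
      ultimately have "G dvd gcd F0 (pderiv F0)" by simp
      moreover have "gcd F0 (pderiv F0) \<noteq> 0" using F00 by simp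
      ultimately have "degree G \<le> degree (gcd F0 (pderiv F0))" by (rule dvd_imp_degree_le)
      hence "resultant F0 (pderiv F0) = 0" using dG by (subst resultant_0_gcd) auto
      hence "[:lin:] dvd D" using res kerK by simp
      thus False using noD by blast
    qed
    define g where "g = coeff G 0"
    have G: "G = [:g:]" unfolding g_def using degree_0_id[OF dG] by simp
    have "[:g * g:] dvd F0" using GG unfolding G by simp
    hence "g * g dvd [:h a:]" unfolding const_poly_dvd_iff lcF0[symmetric] by blast
    moreover have "[:h a:] \<noteq> 0" using ha by simp
    ultimately have "degree (g * g) \<le> 0" and "g \<noteq> 0"
      using dvd_imp_degree_le[of "g*g" "[:h a:]"] by auto
    hence "degree g = 0" by (simp add: degree_mult_eq)
    thus "degree G = 0 \<and> degree (coeff G 0) = 0" using dG g_def by simp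
  qed
  show ?thesis using ha degF0 res sq pd unfolding a_def F0_def D_def by simp
qed

end


lemma ih_t: "idom_hom (spec_t_ts t0)"
proof -
  interpret P: map_poly_idom_hom "\<lambda>c::real poly. poly c t0" ..
  have e: "spec_t_ts t0 = map_poly (\<lambda>c. poly c t0)" by (rule ext) (simp add: spec_t_ts_def)
  show ?thesis unfolding e by (rule P.idom_hom_axioms)
qed

lemma spec_t_hom: "spec_hom (spec_t_ts t0) (t_lin t0)"
proof -
  have "spec_t_ts t0 p = 0 \<longleftrightarrow> t_lin t0 dvd p" for p
  proof -
    have "spec_t_ts t0 p = 0 \<longleftrightarrow> (\<forall>n. coeff (spec_t_ts t0 p) n = coeff 0 n)"
      by (rule poly_eq_iff)
    also have "\<dots> \<longleftrightarrow> (\<forall>n. poly (coeff p n) t0 = 0)" by (simp add: spec_t_ts_def)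
    finally show ?thesis unfolding t_lin_def const_poly_dvd_iff poly_eq_0_iff_dvd .
  qed
  thus ?thesis using ih_t unfolding spec_hom_def spec_hom_axioms_def by blast
qed

lemma spec_s_hom: "spec_hom (spec_s_ts s0) (s_lin s0)"
proof -
  have e: "spec_s_ts s0 = (\<lambda>p. poly p [:s0:])" by (rule ext) (simp add: spec_s_ts_def)
  have "idom_hom (spec_s_ts s0)" unfolding e by (rule poly_hom.idom_hom_axioms)
  moreover have "spec_s_ts s0 p = 0 \<longleftrightarrow> s_lin s0 dvd p" for p
    unfolding e s_lin_def poly_eq_0_iff_dvd by simp
  ultimately show ?thesis unfolding spec_hom_def spec_hom_axioms_def by blast
qed

theorem lemma10:
  fixes F :: poly_yxts
  assumes sqf: "squarefree F"
    and nots: "no_ts_factor F"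
    and lc: "degree (lc_y F) = 0"
    and R0: "R_of F \<noteq> 0"
  shows "(\<forall>t0::real. \<not> t_lin t0 dvd R_of F \<longrightarrow>
            spec_t_ts t0 (coeff (lc_y F) 0) \<noteq> 0
          \<and> degree (spec_t t0 F) = degree F
          \<and> spec_t_xts t0 (disc_res F) = resultant (spec_t t0 F) (spec_t t0 (pderiv F))
          \<and> sqfree_xy (spec_t t0 F))
       \<and> (\<forall>s0::real. \<not> s_lin s0 dvd R_of F \<longrightarrow>
            spec_s_ts s0 (coeff (lc_y F) 0) \<noteq> 0
          \<and> degree (spec_s s0 F) = degree F
          \<and> spec_s_xts s0 (disc_res F) = resultant (spec_s s0 F) (spec_s s0 (pderiv F))
          \<and> sqfree_xy (spec_s s0 F))"
proof (rule conjI; intro allI impI)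
  fix t0 :: real assume nd: "\<not> t_lin t0 dvd R_of F"
  have e1: "spec_t t0 = map_poly (map_poly (spec_t_ts t0))"
    by (rule ext) (simp add: spec_t_def spec_t_xts_def[abs_def])
  have e2: "spec_t_xts t0 = map_poly (spec_t_ts t0)"
    by (rule ext) (simp add: spec_t_xts_def)
  show "spec_t_ts t0 (coeff (lc_y F) 0) \<noteq> 0
          \<and> degree (spec_t t0 F) = degree F
          \<and> spec_t_xts t0 (disc_res F) = resultant (spec_t t0 F) (spec_t t0 (pderiv F))
          \<and> sqfree_xy (spec_t t0 F)"
    using spec_hom.main[OF spec_t_hom lc R0 nd] unfolding e1 e2 by simp
next
  fix s0 :: real assume nd: "\<not> s_lin s0 dvd R_of F"
  have e1: "spec_s s0 = map_poly (map_poly (spec_s_ts s0))"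
    by (rule ext) (simp add: spec_s_def spec_s_xts_def[abs_def])
  have e2: "spec_s_xts s0 = map_poly (spec_s_ts s0)"
    by (rule ext) (simp add: spec_s_xts_def)
  show "spec_s_ts s0 (coeff (lc_y F) 0) \<noteq> 0
          \<and> degree (spec_s s0 F) = degree F
          \<and> spec_s_xts s0 (disc_res F) = resultant (spec_s s0 F) (spec_s s0 (pderiv F))
          \<and> sqfree_xy (spec_s s0 F)"
    using spec_hom.main[OF spec_s_hom lc R0 nd] unfolding e1 e2 by simp
qed

end
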